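(* Let $f\in\mathbb{F}\langle X_1\rangle\otimes\cdots\otimes\mathbb{F}\langle X_k\rangle$ be computed by an ABP of size $s$ with $d$ layers. Let $\mathbf{v}=(v_1,\dots,v_{k-1})$ be a partial evaluation with $v_i:X_i\to\mathcal{M}_{t_i}(\mathbb{F})$, and let $T=t_1t_2\cdots t_{k-1}$, so that $\mathbf{v}(f)$ is a $T\times T$ matrix with entries in $\mathbb{F}\langle X_k\rangle$. Then for each $p,q\in[T]$, the $(p,q)$-th entry of $\mathbf{v}(f)$ can be computed by an ABP of size $sT$ with $d$ layers.
   Context: $\mathbb{F}$ is a field. Let $X_j=\{x_{1j},\dots,x_{nj}\}$, $j=1,\dots,k$, be mutually disjoint sets of variables, $\mathbb{F}\langle X_j\rangle$ the free noncommutative polynomial ring, and consider $\mathbb{F}\langle X_1\rangle\otimes\cdots\otimes\mathbb{F}\langle X_k\rangle$, where $1\otimes\cdots\otimes x_{ij}\otimes\cdots\otimes1$ plays the role of the variable $x_{ij}$. An algebraic branching program (ABP) is a layered directed acyclic graph with a source and a sink, edges only between consecutive layers, each edge labeled by an affine linear form in the variables; it computes the sum over source-to-sink paths of the ordered product of labels; its size is its number of nodes. A partial evaluation $\mathbf{v}=(v_1,\dots,v_{k-1})$ with $v_i:X_i\to A_i$ is extended to monomials $m_1\otimes\cdots\otimes m_k$ ($m_i\in X_i^*$) by $\mathbf{v}(m)=v_1(m_1)\otimes\cdots\otimes v_{k-1}(m_{k-1})\otimes m_k$ and by linearity; with $A_i=\mathcal{M}_{t_i}(\mathbb{F})$ the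 value lies in $\mathcal{M}_T(\mathbb{F})\otimes\mathbb{F}\langle X_k\rangle$, i.e. $T\times T$ matrices over $\mathbb{F}\langle X_k\rangle$ (via Kronecker products). *)

theory Defs
  imports Main "Jordan_Normal_Form.Matrix"
begin

text \<open>Elements of F<X_1> (x) ... (x) F<X_k>: a monomial m_1 (x) ... (x) m_k is a list of
  k words (component j is a word over variable indices i, meaning x_{i j}, 0-indexed);
  a polynomial is given by its coefficient function on monomials.\<close>
type_synonym 'a tpoly = "nat list list \<Rightarrow> 'a"

definition tone :: "nat \<Rightarrow> 'a::field tpoly" where
  "tone k m = (if m = replicate k [] then 1 else 0)"

definition tvar :: "nat \<Rightarrow> nat \<Rightarrow> nat \<Rightarrow> 'a::field tpoly" where
  "tvar k i j m = (if m = (replicate k [])[j := [i]] then 1 else 0)"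

definition tsplits :: "nat list list \<Rightarrow> (nat list list \<times> nat list list) set" where
  "tsplits m = {(u, w). length u = length m \<and> length w = length m \<and>
                        (\<forall>j<length m. u ! j @ w ! j = m ! j)}"

definition tmult :: "'a::field tpoly \<Rightarrow> 'a tpoly \<Rightarrow> 'a tpoly" where
  "tmult f g m = (\<Sum>(u, w)\<in>tsplits m. f u * g w)"

definition aff_poly :: "nat \<Rightarrow> nat \<Rightarrow> 'a::field \<Rightarrow> (nat \<Rightarrow> nat \<Rightarrow> 'a) \<Rightarrow> 'a tpoly" where
  "aff_poly n k c a m = c * tone k m + (\<Sum>i<n. \<Sum>j<k. a i j * tvar k i j m)"

text \<open>Layered ABP with d layers of nodes, layer l has w l nodes (numbered 0..<w l);
  the first and last layers consist of the source resp. sink only (node 0);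
  L l a b is the label (constant, coefficients) of the edge from node a of layer l to
  node b of layer l+1 (a missing edge = label 0).\<close>
definition is_abp :: "nat \<Rightarrow> (nat \<Rightarrow> nat) \<Rightarrow> bool" where
  "is_abp d w \<longleftrightarrow> d \<ge> 2 \<and> w 0 = 1 \<and> w (d - 1) = 1"

definition abp_size :: "nat \<Rightarrow> (nat \<Rightarrow> nat) \<Rightarrow> nat" where
  "abp_size d w = (\<Sum>l<d. w l)"

definition abp_paths :: "nat \<Rightarrow> (nat \<Rightarrow> nat) \<Rightarrow> nat list set" where
  "abp_paths d w = {ps. length ps = d \<and> ps ! 0 = 0 \<and> ps ! (d - 1) = 0 \<and> (\<forall>l<d. ps ! l < w l)}"

definition abp_poly :: "nat \<Rightarrow> nat \<Rightarrow> nat \<Rightarrow> (nat \<Rightarrow> nat) \<Rightarrow>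
    (nat \<Rightarrow> nat \<Rightarrow> nat \<Rightarrow> 'a::field \<times> (nat \<Rightarrow> nat \<Rightarrow> 'a)) \<Rightarrow> 'a tpoly" where
  "abp_poly n k d w L m =
     (\<Sum>ps\<in>abp_paths d w.
        foldr (\<lambda>l acc. tmult (case L l (ps ! l) (ps ! Suc l) of (c, a) \<Rightarrow> aff_poly n k c a) acc)
              [0..<d - 1] (tone k) m)"

text \<open>Partial evaluation: v i a is the t i x t i matrix assigned to x_{a i} (i < k-1).\<close>
definition wordmat :: "(nat \<Rightarrow> nat) \<Rightarrow> (nat \<Rightarrow> nat \<Rightarrow> 'a::field mat) \<Rightarrow> nat \<Rightarrow> nat list \<Rightarrow> 'a mat" where
  "wordmat t v i ws = foldr (\<lambda>a M. v i a * M) ws (1\<^sub>m (t i))"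

definition Tdim :: "(nat \<Rightarrow> nat) \<Rightarrow> nat \<Rightarrow> nat" where
  "Tdim t k = (\<Prod>i<k - 1. t i)"

text \<open>Index of factor i in row/column index p of the Kronecker product A_0 (x) ... (x) A_{k-2}.\<close>
definition kdigit :: "(nat \<Rightarrow> nat) \<Rightarrow> nat \<Rightarrow> nat \<Rightarrow> nat \<Rightarrow> nat" where
  "kdigit t k i p = (p div (\<Prod>j\<in>{Suc i..<k - 1}. t j)) mod t i"

text \<open>(p,q)-entry of v(f), an element of F<X_k>, represented as a one-factor tensor polynomial.\<close>
definition peval_entry :: "(nat \<Rightarrow> nat) \<Rightarrow> nat \<Rightarrow> (nat \<Rightarrow> nat \<Rightarrow> 'a::field mat) \<Rightarrow> 'a tpoly
    \<Rightarrow> nat \<Rightarrow> nat \<Rightarrow> 'a tpoly" where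
  "peval_entry t k v f p q m =
     (if length m = 1 then
        (\<Sum>mm\<in>{mm. f mm \<noteq> 0 \<and> length mm = k \<and> mm ! (k - 1) = m ! 0}.
           f mm * (\<Prod>i<k - 1. wordmat t v i (mm ! i) $$ (kdigit t k i p, kdigit t k i q)))
      else 0)"

end

theory Submission
  imports Defs "HOL-Library.Function_Algebras"
begin


definition dg :: "(nat\<Rightarrow>nat) \<Rightarrow> nat \<Rightarrow> nat \<Rightarrow> nat \<Rightarrow> nat" where
  "dg t K i r = r div (\<Prod>j\<in>{Suc i..<K}. t j) mod t i"

lemma sum_shift_ivl: "(\<Sum>r\<in>{c..<c+n}. F r) = (\<Sum>b<n. F (c + b :: nat))"
  by (induct n) (auto simp: add.commute)

lemma sum_pair_split:
  fixes F :: "nat \<Rightarrow> 'b::comm_monoid_add"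
  shows "(\<Sum>r<a*c. F r) = (\<Sum>x<a. \<Sum>b<c. F (x*c + b))"
  using sum.nat_group[of "\<lambda>x. \<Sum>b<c. F (x*c + b)" c a] sum.nat_group[of F c a]
  by (simp add: sum_shift_ivl)

lemma digit_sum:
  fixes g :: "nat \<Rightarrow> nat \<Rightarrow> 'b::comm_semiring_1"
  shows "(\<Sum>r<(\<Prod>i<K. t i). \<Prod>i<K. g i (dg t K i r)) = (\<Prod>i<K. \<Sum>c<t i. g i c)"
proof (induct K)
  case 0
  then show ?case by simp
next
  case (Suc K)
  show ?case
  proof (cases "t K = 0")
    case True
    then show ?thesis by simp
  next
    case False
    have d1: "dg t (Suc K) i (x * t K + b) = dg t K i x" if "i < K" "b < t K" for i x b
    proof -
      have "(\<Prod>j\<in>{Suc i..<Suc K}. t j) = t K * (\<Prod>j\<in>{Suc i..<K}. t j)"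
        using that by (simp add: prod.atLeastLessThan_Suc)
      moreover have "(x * t K + b) div t K = x" using that False by simp
      ultimately show ?thesis unfolding dg_def by (simp add: div_mult2_eq)
    qed
    have d2: "dg t (Suc K) K (x * t K + b) = b" if "b < t K" for x b
      using that unfolding dg_def by simp
    have "(\<Sum>r<(\<Prod>i<Suc K. t i). \<Prod>i<Suc K. g i (dg t (Suc K) i r))
       = (\<Sum>x<(\<Prod>i<K. t i). \<Sum>b<t K. \<Prod>i<Suc K. g i (dg t (Suc K) i (x * t K + b)))"
      by (simp add: sum_pair_split)
    also have "\<dots> = (\<Sum>x<(\<Prod>i<K. t i). \<Sum>b<t K. (\<Prod>i<K. g i (dg t K i x)) * g K b)"
      by (intro sum.cong refl) (simp add: d1 d2)
    also have "\<dots> = (\<Sum>x<(\<Prod>i<K. t i). \<Prod>i<K. g i (dg t K i x)) * (\<Sum>b<t K. g K b)"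
      by (simp add: sum_product)
    finally show ?thesis using Suc by simp
  qed
qed

lemma digit_lt: "0 < t i \<Longrightarrow> dg t K i r < t i"
  unfolding dg_def by simp

lemma digit_inj:
  assumes "r < (\<Prod>i<K. t i)" "r' < (\<Prod>i<K. t i)" "\<forall>i<K. dg t K i r = dg t K i r'"
  shows "r = r'"
proof (rule ccontr)
  assume ne: "r \<noteq> r'"
  have pos: "0 < t i" if "i < K" for i
    using assms(1) that by (metis gr_zeroI lessThan_iff less_nat_zero_code prod_zero_iff finite_lessThan)
  let ?D = "\<lambda>x. \<Prod>i<K. (if dg t K i x = dg t K i r' then 1 else 0::nat)"
  have "(\<Sum>x<(\<Prod>i<K. t i). ?D x) = (\<Prod>i<K. \<Sum>c<t i. (if c = dg t K i r' then 1 else 0::nat))"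
    using digit_sum[where g="\<lambda>i c. if c = dg t K i r' then 1 else 0::nat" and K=K and t=t] by simp
  also have "\<dots> = 1" using pos digit_lt by (simp add: pos digit_lt)
  finally have s1: "(\<Sum>x<(\<Prod>i<K. t i). ?D x) = 1" .
  have "?D r + ?D r' \<le> (\<Sum>x<(\<Prod>i<K. t i). ?D x)"
  proof -
    have "(\<Sum>x\<in>{r, r'}. ?D x) \<le> (\<Sum>x<(\<Prod>i<K. t i). ?D x)"
      using assms by (intro sum_mono2) auto
    then show ?thesis using ne by simp
  qed
  moreover have "?D r = 1" "?D r' = 1" using assms(3) by auto
  ultimately show False using s1 by simp
qed



function absum :: "nat \<Rightarrow> (nat\<Rightarrow>nat) \<Rightarrow> (nat \<Rightarrow> nat \<Rightarrow> nat \<Rightarrow> 'c \<Rightarrow> 'c) \<Rightarrow> 'c \<Rightarrow> nat \<Rightarrow> nat \<Rightarrow> 'c::comm_monoid_add" where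
  "absum d w F oo l a = (if d - 1 \<le> l then (if a = 0 then oo else 0)
     else (\<Sum>b<w (Suc l). F l a b (absum d w F oo (Suc l) b)))"
  by pat_completeness auto
termination by (relation "measure (\<lambda>(d,w,F,oo,l,a). d - l)") auto

declare absum.simps[simp del]

definition pset :: "nat \<Rightarrow> (nat\<Rightarrow>nat) \<Rightarrow> nat \<Rightarrow> nat list \<Rightarrow> nat \<Rightarrow> nat list set" where
  "pset d w l pre a = {ps. length ps = d \<and> take l ps = pre \<and> ps ! l = a \<and> ps ! (d - 1) = 0 \<and>
      (\<forall>j\<in>{l..<d}. ps ! j < w j)}"

lemma pset_finite: "finite (pset d w l pre a)"
proof -
  let ?N = "\<Sum>j<d. w j"
  have "pset d w l pre a \<subseteq> {ps. set ps \<subseteq> set pre \<union> {..<?N} \<and> length ps = d}"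
  proof
    fix ps assume ps: "ps \<in> pset d w l pre a"
    have "ps ! j \<in> set pre \<union> {..<?N}" if "j < d" for j
    proof (cases "j < l")
      case True
      then have "take l ps ! j = ps ! j" "take l ps = pre" "j < length (take l ps)"
        using ps that unfolding pset_def by auto
      then have "ps ! j = pre ! j" "j < length pre" by auto
      then show ?thesis by auto
    next
      case False
      then have "ps ! j < w j" using ps that unfolding pset_def by auto
      also have "w j \<le> ?N" using that by (intro member_le_sum) auto
      finally show ?thesis by auto
    qed
    note * = this
    have len: "length ps = d" using ps unfolding pset_def by auto
    have "set ps \<subseteq> set pre \<union> {..<?N}"
    proof
      fix x assume "x \<in> set ps"
      then obtain j where "j < length ps" "ps ! j = x" by (auto simp: in_set_conv_nth)
      then show "x \<in> set pre \<union> {..<?N}" using *[of j] len by auto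
    qed
    then show "ps \<in> {ps. set ps \<subseteq> set pre \<union> {..<?N} \<and> length ps = d}"
      using len by auto
  qed
  moreover have "finite {ps. set ps \<subseteq> set pre \<union> {..<?N} \<and> length ps = d}"
    by (intro finite_lists_length_eq) auto
  ultimately show ?thesis by (rule finite_subset)
qed

lemma F_sum:
  fixes F :: "'c::comm_monoid_add \<Rightarrow> 'c"
  assumes "F 0 = 0" "\<And>x y. F (x + y) = F x + F y"
  shows "F (sum g A) = sum (\<lambda>x. F (g x)) A"
  by (induct A rule: infinite_finite_induct) (auto simp: assms)

lemma abp_rec_gen:
  fixes F :: "nat \<Rightarrow> nat \<Rightarrow> nat \<Rightarrow> 'c::comm_monoid_add \<Rightarrow> 'c"
  assumes F0: "\<And>j a b. F j a b 0 = 0" and Fadd: "\<And>j a b x y. F j a b (x + y) = F j a b x + F j a b y"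
    and "d \<ge> 1"
  shows "n = d - 1 - l \<Longrightarrow> l \<le> d - 1 \<Longrightarrow> a < w l \<Longrightarrow> length pre = l \<Longrightarrow>
    (\<Sum>ps\<in>pset d w l pre a. foldr (\<lambda>j acc. F j (ps ! j) (ps ! Suc j) acc) [l..<d-1] oo)
     = absum d w F oo l a"
proof (induct n arbitrary: l pre a)
  case 0
  then have l: "l = d - 1" by simp
  have "pset d w l pre a = (if a = 0 then {pre @ [0]} else {})"
  proof -
    have "ps = pre @ [0]" if "ps \<in> pset d w l pre a" for ps
    proof -
      have "length ps = Suc l" "take l ps = pre" "ps ! l = 0"
        using that l \<open>d \<ge> 1\<close> unfolding pset_def by auto
      then have "ps = take (Suc l) ps" by simp
      also have "\<dots> = take l ps @ [ps ! l]" by (rule take_Suc_conv_app_nth) (use \<open>length ps = Suc l\<close> in simp)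
      finally show ?thesis using \<open>take l ps = pre\<close> \<open>ps ! l = 0\<close> by simp
    qed
    moreover have "pre @ [0] \<in> pset d w l pre 0" if "a = 0"
    proof -
      have "\<forall>j\<in>{l..<d}. (pre @ [0]) ! j < w j"
      proof
        fix j assume "j \<in> {l..<d}"
        then have "j = l" using l by auto
        then show "(pre @ [0]) ! j < w j" using 0 \<open>a = 0\<close> by (simp add: nth_append)
      qed
      then show ?thesis using 0 l \<open>d \<ge> 1\<close> unfolding pset_def
        by (auto simp: nth_append)
    qed
    moreover have "a = 0" if "ps \<in> pset d w l pre a" for ps
      using that l unfolding pset_def by auto
    ultimately show ?thesis by auto
  qed
  then show ?case using l by (subst absum.simps) simp
next
  case (Suc n)
  then have l: "l < d - 1" by simp
  have split: "pset d w l pre a = (\<Union>b\<in>{..<w (Suc l)}. pset d w (Suc l) (pre @ [a]) b)"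
  proof (intro equalityI subsetI)
    fix ps assume ps: "ps \<in> pset d w l pre a"
    then have "take (Suc l) ps = pre @ [a]" using l unfolding pset_def
      by (auto simp: take_Suc_conv_app_nth)
    then show "ps \<in> (\<Union>b\<in>{..<w (Suc l)}. pset d w (Suc l) (pre @ [a]) b)"
      using ps l unfolding pset_def by auto
  next
    fix ps assume "ps \<in> (\<Union>b\<in>{..<w (Suc l)}. pset d w (Suc l) (pre @ [a]) b)"
    then obtain b where b: "b < w (Suc l)" and ps: "ps \<in> pset d w (Suc l) (pre @ [a]) b" by auto
    then have tk: "take (Suc l) ps = pre @ [a]" and len: "length ps = d" unfolding pset_def by auto
    have "take l ps = take l (take (Suc l) ps)" by simp
    then have "take l ps = pre" using tk Suc.prems by simp
    moreover have "take (Suc l) ps ! l = ps ! l" by simp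
    then have "ps ! l = a" using tk Suc.prems by (metis nth_append_length)
    moreover have "\<forall>j\<in>{l..<d}. ps ! j < w j"
    proof
      fix j assume j: "j \<in> {l..<d}"
      show "ps ! j < w j"
      proof (cases "j = l")
        case True then show ?thesis using \<open>ps ! l = a\<close> Suc.prems by simp
      next
        case False then show ?thesis using j ps unfolding pset_def by auto
      qed
    qed
    ultimately show "ps \<in> pset d w l pre a" using ps unfolding pset_def by auto
  qed
  have disj: "pset d w (Suc l) (pre @ [a]) b \<inter> pset d w (Suc l) (pre @ [a]) b' = {}" if "b \<noteq> b'" for b b'
    using that unfolding pset_def by auto
  have fold_eq: "foldr (\<lambda>j acc. F j (ps ! j) (ps ! Suc j) acc) [l..<d-1] oo
      = F l a b (foldr (\<lambda>j acc. F j (ps ! j) (ps ! Suc j) acc) [Suc l..<d-1] oo)"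
    if "ps \<in> pset d w (Suc l) (pre @ [a]) b" for ps b
  proof -
    have tk: "take (Suc l) ps = pre @ [a]" using that unfolding pset_def by auto
    have "take (Suc l) ps ! l = ps ! l" by simp
    then have "ps ! l = a" using tk Suc.prems by (metis nth_append_length)
    moreover have "ps ! Suc l = b" using that unfolding pset_def by auto
    ultimately show ?thesis using l by (simp add: upt_conv_Cons)
  qed
  have "(\<Sum>ps\<in>pset d w l pre a. foldr (\<lambda>j acc. F j (ps ! j) (ps ! Suc j) acc) [l..<d-1] oo)
      = (\<Sum>b<w (Suc l). \<Sum>ps\<in>pset d w (Suc l) (pre @ [a]) b.
            foldr (\<lambda>j acc. F j (ps ! j) (ps ! Suc j) acc) [l..<d-1] oo)"
    unfolding split by (rule sum.UNION_disjoint) (auto simp: pset_finite disj)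
  also have "\<dots> = (\<Sum>b<w (Suc l). \<Sum>ps\<in>pset d w (Suc l) (pre @ [a]) b.
            F l a b (foldr (\<lambda>j acc. F j (ps ! j) (ps ! Suc j) acc) [Suc l..<d-1] oo))"
    by (intro sum.cong refl) (rule fold_eq, simp)
  also have "\<dots> = (\<Sum>b<w (Suc l). F l a b (\<Sum>ps\<in>pset d w (Suc l) (pre @ [a]) b.
            foldr (\<lambda>j acc. F j (ps ! j) (ps ! Suc j) acc) [Suc l..<d-1] oo))"
    by (intro sum.cong refl F_sum[symmetric]) (auto simp: F0 Fadd)
  also have "\<dots> = (\<Sum>b<w (Suc l). F l a b (absum d w F oo (Suc l) b))"
    by (intro sum.cong refl arg_cong[where f="F l a _"] Suc.hyps) (use Suc.prems in auto)
  also have "\<dots> = absum d w F oo l a"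
    using l by (subst (2) absum.simps) simp
  finally show ?case .
qed

lemma abp_rec:
  fixes F :: "nat \<Rightarrow> nat \<Rightarrow> nat \<Rightarrow> 'c::comm_monoid_add \<Rightarrow> 'c"
  assumes F0: "\<And>j a b. F j a b 0 = 0" and Fadd: "\<And>j a b x y. F j a b (x + y) = F j a b x + F j a b y"
    and "d \<ge> 1" "w 0 = 1"
  shows "(\<Sum>ps\<in>abp_paths d w. foldr (\<lambda>j acc. F j (ps ! j) (ps ! Suc j) acc) [0..<d-1] oo)
     = absum d w F oo 0 0"
proof -
  have "abp_paths d w = pset d w 0 [] 0"
    unfolding abp_paths_def pset_def using assms(4) by auto
  then show ?thesis using abp_rec_gen[where F=F, OF F0 Fadd \<open>d \<ge> 1\<close>, where n="d - 1 - 0" and l=0 and w=w and pre="[]" and oo=oo and a=0] assms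
    by simp
qed



definition tsupp :: "'a::field tpoly \<Rightarrow> nat list list set" where
  "tsupp g = {m. g m \<noteq> 0}"

definition goodm :: "nat \<Rightarrow> nat \<Rightarrow> nat list list \<Rightarrow> bool" where
  "goodm n k mm \<longleftrightarrow> length mm = k \<and> (\<forall>j<k. set (mm ! j) \<subseteq> {..<n})"

definition good :: "nat \<Rightarrow> nat \<Rightarrow> 'a::field tpoly \<Rightarrow> bool" where
  "good n k g \<longleftrightarrow> finite (tsupp g) \<and> (\<forall>mm\<in>tsupp g. goodm n k mm)"

definition zc :: "nat list list \<Rightarrow> nat list list \<Rightarrow> nat list list" where
  "zc u w = map (\<lambda>(x, y). x @ y) (zip u w)"

lemma sum_fun_apply: "(sum f A) x = sum (\<lambda>a. f a x) A"
  by (induct A rule: infinite_finite_induct) auto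

lemma tsplits_finite: "finite (tsplits m)"
proof -
  let ?C = "{z. set z \<subseteq> set (concat m) \<and> length z \<le> length (concat m)}"
  let ?X = "{xs. set xs \<subseteq> ?C \<and> length xs = length m}"
  have fC: "finite ?C" by (rule finite_lists_length_le) simp
  have sub: "tsplits m \<subseteq> ?X \<times> ?X"
  proof
    fix uw assume "uw \<in> tsplits m"
    then obtain u w where uw: "uw = (u, w)" and len: "length u = length m" "length w = length m"
      and eq: "\<forall>j<length m. u ! j @ w ! j = m ! j" unfolding tsplits_def by auto
    have mj: "set (m ! j) \<subseteq> set (concat m) \<and> length (m ! j) \<le> length (concat m)" if "j < length m" for j
    proof -
      have "m ! j \<in> set m" using that by simp
      moreover have "length (m ! j) \<le> sum_list (map length m)"
        using that by (metis elem_le_sum_list length_map nth_map)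
      ultimately show ?thesis by (auto simp: length_concat)
    qed
    have "set u \<subseteq> ?C"
    proof
      fix z assume "z \<in> set u"
      then obtain j where "j < length u" "u ! j = z" by (auto simp: in_set_conv_nth)
      moreover have e: "u ! j @ w ! j = m ! j" using eq len \<open>j < length u\<close> by auto
      ultimately have "set z \<subseteq> set (m ! j)" "length z \<le> length (m ! j)"
        by (auto simp: e[symmetric])
      then show "z \<in> ?C" using mj[of j] len \<open>j < length u\<close> by auto
    qed
    moreover have "set w \<subseteq> ?C"
    proof
      fix z assume "z \<in> set w"
      then obtain j where "j < length w" "w ! j = z" by (auto simp: in_set_conv_nth)
      moreover have e: "u ! j @ w ! j = m ! j" using eq len \<open>j < length w\<close> by auto
      ultimately have "set z \<subseteq> set (m ! j)" "length z \<le> length (m ! j)"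
        by (auto simp: e[symmetric])
      then show "z \<in> ?C" using mj[of j] len \<open>j < length w\<close> by auto
    qed
    ultimately show "uw \<in> ?X \<times> ?X" using uw len by auto
  qed
  have "finite ?X" by (rule finite_lists_length_eq[OF fC])
  then show ?thesis using sub by (meson finite_SigmaI finite_subset)
qed

lemma tmult_zero[simp]: "tmult f 0 = 0"
  unfolding tmult_def by (auto simp: fun_eq_iff)

lemma tmult_add: "tmult f (g + h) = tmult f g + tmult f h"
  unfolding tmult_def by (auto simp: fun_eq_iff sum.distrib distrib_left split_def)

lemma tmult_sum: "tmult f (sum g A) = sum (\<lambda>x. tmult f (g x)) A"
  by (rule F_sum[where F="tmult f"]) (rule tmult_zero, rule tmult_add)

lemma good_zero: "good n k 0"
  unfolding good_def tsupp_def by auto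

lemma good_add: "good n k g \<Longrightarrow> good n k h \<Longrightarrow> good n k (g + h)"
proof -
  assume g: "good n k g" and h: "good n k h"
  have "tsupp (g + h) \<subseteq> tsupp g \<union> tsupp h" unfolding tsupp_def by auto
  then show ?thesis using g h unfolding good_def by (meson finite_Un finite_subset UnE subsetD)
qed

lemma good_sum: "(\<And>x. x \<in> A \<Longrightarrow> good n k (g x)) \<Longrightarrow> good n k (sum g A)"
  by (induct A rule: infinite_finite_induct) (auto simp: good_zero good_add)

lemma good_scale: "good n k g \<Longrightarrow> good n k (\<lambda>m. c * g m)"
proof -
  assume g: "good n k g"
  have "tsupp (\<lambda>m. c * g m) \<subseteq> tsupp g" unfolding tsupp_def by auto
  then show ?thesis using g unfolding good_def by (meson finite_subset subsetD)
qed

lemma good_sum': "finite A \<Longrightarrow> (\<And>x. x \<in> A \<Longrightarrow> good n k (g x)) \<Longrightarrow> good n k (\<lambda>m. \<Sum>x\<in>A. g x m)"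
  using good_sum[of A n k g] by (simp add: sum_fun_apply[symmetric])

lemma good_tone: "good n k (tone k)"
proof -
  have "tsupp (tone k :: 'a tpoly) \<subseteq> {replicate k []}" unfolding tsupp_def tone_def by auto
  then show ?thesis unfolding good_def goodm_def by (auto intro: finite_subset)
qed

lemma good_tvar: "i < n \<Longrightarrow> j < k \<Longrightarrow> good n k (tvar k i j)"
proof -
  assume "i < n" "j < k"
  have "tsupp (tvar k i j :: 'a tpoly) \<subseteq> {(replicate k [])[j := [i]]}" unfolding tsupp_def tvar_def by auto
  moreover have "goodm n k ((replicate k [])[j := [i]])" unfolding goodm_def using \<open>i < n\<close> \<open>j < k\<close>
    by (auto simp: nth_list_update split: if_splits)
  ultimately show ?thesis unfolding good_def by (auto intro: finite_subset)
qed

lemma good_aff: "good n k (aff_poly n k c a)"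
proof -
  have eq: "aff_poly n k c a = (\<lambda>m. c * tone k m) + (\<lambda>m. (\<Sum>i<n. \<Sum>j<k. a i j * tvar k i j m))"
    unfolding aff_poly_def by (simp add: fun_eq_iff)
  have "good n k (\<lambda>m. (\<Sum>i<n. \<Sum>j<k. a i j * tvar k i j m))"
    by (intro good_sum' good_scale good_tvar) auto
  then show ?thesis unfolding eq by (intro good_add good_scale good_tone)
qed

lemma zc_nth: "length u = length w \<Longrightarrow> j < length u \<Longrightarrow> zc u w ! j = u ! j @ w ! j"
  unfolding zc_def by simp

lemma tsplits_zc: "length mm = k \<Longrightarrow> (u, w) \<in> tsplits mm \<longleftrightarrow> (length u = k \<and> length w = k \<and> zc u w = mm)"
proof
  assume len: "length mm = k" and "(u, w) \<in> tsplits mm"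
  then have l: "length u = k" "length w = k" and e: "\<forall>j<k. u ! j @ w ! j = mm ! j"
    unfolding tsplits_def by auto
  have "zc u w = mm"
  proof (rule nth_equalityI)
    show "length (zc u w) = length mm" using l len by (simp add: zc_def)
    fix j assume "j < length (zc u w)"
    then have "j < k" using l by (simp add: zc_def)
    then show "zc u w ! j = mm ! j" using e l by (simp add: zc_nth)
  qed
  then show "length u = k \<and> length w = k \<and> zc u w = mm" using l by simp
next
  assume len: "length mm = k" and h: "length u = k \<and> length w = k \<and> zc u w = mm"
  then have "\<forall>j<k. u ! j @ w ! j = mm ! j" by (auto simp: zc_nth)
  then show "(u, w) \<in> tsplits mm" using h len unfolding tsplits_def by auto
qed

lemma tsupp_tmult: "tsupp (tmult g h) \<subseteq> (\<lambda>(u, w). zc u w) ` {(u, w). u \<in> tsupp g \<and> w \<in> tsupp h \<and> length u = length w}"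
proof
  fix mm assume "mm \<in> tsupp (tmult g h)"
  then have "(\<Sum>(u, w)\<in>tsplits mm. g u * h w) \<noteq> 0" unfolding tsupp_def tmult_def by auto
  then obtain uw where "uw \<in> tsplits mm" "(case uw of (u, w) \<Rightarrow> g u * h w) \<noteq> 0"
    by (rule sum.not_neutral_contains_not_neutral)
  then obtain u w where uw: "(u, w) \<in> tsplits mm" "g u * h w \<noteq> 0"
    by (cases uw) auto
  then have "zc u w = mm" "length u = length w" using tsplits_zc[of mm "length mm" u w] by auto
  then show "mm \<in> (\<lambda>(u, w). zc u w) ` {(u, w). u \<in> tsupp g \<and> w \<in> tsupp h \<and> length u = length w}"
    using uw unfolding tsupp_def by force
qed

lemma good_tmult: "good n k g \<Longrightarrow> good n k h \<Longrightarrow> good n k (tmult g h)"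
proof -
  assume g: "good n k g" and h: "good n k h"
  have fin: "finite {(u, w). u \<in> tsupp g \<and> w \<in> tsupp h \<and> length u = length w}"
    using g h unfolding good_def
    by (rule_tac finite_subset[of _ "tsupp g \<times> tsupp h"]) auto
  have "goodm n k (zc u w)" if "u \<in> tsupp g" "w \<in> tsupp h" for u w
    using that g h unfolding good_def goodm_def by (auto simp: zc_nth zc_def)
  then show ?thesis using tsupp_tmult[of g h] fin unfolding good_def
    by (auto intro: finite_subset)
qed



definition Em :: "(nat \<Rightarrow> nat) \<Rightarrow> nat \<Rightarrow> (nat \<Rightarrow> nat \<Rightarrow> 'a::field mat) \<Rightarrow> nat list list \<Rightarrow> nat \<Rightarrow> nat \<Rightarrow> 'a" where
  "Em t k v mm p q = (\<Prod>i<k - 1. wordmat t v i (mm ! i) $$ (kdigit t k i p, kdigit t k i q))"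

lemma kdigit_dg: "kdigit t k i p = dg t (k - 1) i p"
  unfolding kdigit_def dg_def by simp

lemma pe_superset:
  assumes "finite S" "tsupp g \<subseteq> S"
  shows "peval_entry t k v g p q m = (if length m = 1 then
     (\<Sum>mm\<in>{mm\<in>S. length mm = k \<and> mm ! (k - 1) = m ! 0}. g mm * Em t k v mm p q) else 0)"
proof (cases "length m = 1")
  case True
  have "(\<Sum>mm\<in>{mm\<in>S. length mm = k \<and> mm ! (k - 1) = m ! 0}. g mm * Em t k v mm p q)
     = (\<Sum>mm\<in>{mm. g mm \<noteq> 0 \<and> length mm = k \<and> mm ! (k - 1) = m ! 0}. g mm * Em t k v mm p q)"
    by (rule sum.mono_neutral_right) (use assms in \<open>auto simp: tsupp_def\<close>)
  then show ?thesis using True unfolding peval_entry_def Em_def by simp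
next
  case False
  then show ?thesis unfolding peval_entry_def by simp
qed

lemma pe_sum:
  assumes "finite A" "\<And>x. x \<in> A \<Longrightarrow> finite (tsupp (g x))"
  shows "peval_entry t k v (\<lambda>m. \<Sum>x\<in>A. g x m) p q m = (\<Sum>x\<in>A. peval_entry t k v (g x) p q m)"
proof -
  let ?S = "\<Union>x\<in>A. tsupp (g x)"
  have fS: "finite ?S" using assms by auto
  have s1: "tsupp (\<lambda>m. \<Sum>x\<in>A. g x m) \<subseteq> ?S"
  proof
    fix mm assume "mm \<in> tsupp (\<lambda>m. \<Sum>x\<in>A. g x m)"
    then have "(\<Sum>x\<in>A. g x mm) \<noteq> 0" unfolding tsupp_def by auto
    then obtain x where "x \<in> A" "g x mm \<noteq> 0" by (rule sum.not_neutral_contains_not_neutral)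
    then show "mm \<in> ?S" unfolding tsupp_def by auto
  qed
  have s2: "tsupp (g x) \<subseteq> ?S" if "x \<in> A" for x using that by auto
  show ?thesis
    unfolding pe_superset[OF fS s1]
    by (auto simp: pe_superset[OF fS s2] sum_distrib_right intro: sum.swap)
qed

lemma pe_sum_fun:
  assumes "finite A" "\<And>x. x \<in> A \<Longrightarrow> finite (tsupp (g x))"
  shows "peval_entry t k v (sum g A) p q = sum (\<lambda>x. peval_entry t k v (g x) p q) A"
proof -
  have eq: "sum g A = (\<lambda>m. \<Sum>x\<in>A. g x m)" by (simp add: fun_eq_iff sum_fun_apply)
  show ?thesis unfolding eq by (rule ext) (simp add: sum_fun_apply pe_sum[OF assms])
qed

lemma pe_scale:
  assumes "finite (tsupp g)"
  shows "peval_entry t k v (\<lambda>m. c * g m) p q m = c * peval_entry t k v g p q m"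
proof -
  have s1: "tsupp (\<lambda>m. c * g m) \<subseteq> tsupp g" unfolding tsupp_def by auto
  show ?thesis
    unfolding pe_superset[OF assms s1] pe_superset[OF assms order.refl]
    by (simp add: sum_distrib_left mult.assoc)
qed

lemma pe_add:
  assumes "finite (tsupp g)" "finite (tsupp h)"
  shows "peval_entry t k v (\<lambda>m. g m + h m) p q m = peval_entry t k v g p q m + peval_entry t k v h p q m"
proof -
  let ?S = "tsupp g \<union> tsupp h"
  have fS: "finite ?S" using assms by auto
  have s1: "tsupp (\<lambda>m. g m + h m) \<subseteq> ?S" unfolding tsupp_def by auto
  show ?thesis
    unfolding pe_superset[OF fS s1] pe_superset[OF fS Un_upper1] pe_superset[OF fS Un_upper2]
    by (simp add: sum.distrib distrib_right)
qed



lemma mat_mult_entry: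
  fixes A B :: "'a::semiring_0 mat"
  assumes "A \<in> carrier_mat m l" "B \<in> carrier_mat l r" "i < m" "j < r"
  shows "(A * B) $$ (i, j) = (\<Sum>c<l. A $$ (i, c) * B $$ (c, j))"
  using assms by (auto simp: scalar_prod_def atLeast0LessThan intro!: sum.cong)

lemma wordmat_carrier:
  assumes "\<forall>a<n. v i a \<in> carrier_mat (t i) (t i)" "set ws \<subseteq> {..<n}"
  shows "wordmat t v i ws \<in> carrier_mat (t i) (t i)"
  using assms(2) by (induct ws) (auto simp: wordmat_def intro!: mult_carrier_mat[of _ "t i" "t i"] assms(1)[rule_format])

lemma wordmat_append:
  assumes "\<forall>a<n. v i a \<in> carrier_mat (t i) (t i)" "set ws \<subseteq> {..<n}" "set us \<subseteq> {..<n}"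
  shows "wordmat t v i (ws @ us) = wordmat t v i ws * wordmat t v i us"
  using assms(2)
proof (induct ws)
  case Nil
  have "wordmat t v i us \<in> carrier_mat (t i) (t i)" using wordmat_carrier[where n=n and v=v and i=i and t=t and ws=us, OF assms(1,3)] .
  then show ?case by (simp add: wordmat_def)
next
  case (Cons a ws)
  have c1: "v i a \<in> carrier_mat (t i) (t i)" using Cons.prems assms(1) by auto
  have c2: "wordmat t v i ws \<in> carrier_mat (t i) (t i)" using wordmat_carrier[where n=n and v=v and i=i and t=t and ws=ws, OF assms(1)] Cons.prems by auto
  have c3: "wordmat t v i us \<in> carrier_mat (t i) (t i)" using wordmat_carrier[where n=n and v=v and i=i and t=t and ws=us, OF assms(1,3)] .
  have "wordmat t v i ((a # ws) @ us) = v i a * wordmat t v i (ws @ us)" by (simp add: wordmat_def)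
  also have "\<dots> = v i a * (wordmat t v i ws * wordmat t v i us)" using Cons by simp
  also have "\<dots> = (v i a * wordmat t v i ws) * wordmat t v i us" using c1 c2 c3 by (simp add: assoc_mult_mat)
  also have "v i a * wordmat t v i ws = wordmat t v i (a # ws)" by (simp add: wordmat_def)
  finally show ?case .
qed

lemma Tdim_pos_t: "0 < Tdim t k \<Longrightarrow> i < k - 1 \<Longrightarrow> 0 < t i"
  unfolding Tdim_def by (metis finite_lessThan gr_zeroI lessThan_iff less_irrefl prod_zero_iff)

lemma E_mult:
  assumes carr: "\<forall>i<k-1. \<forall>a<n. v i a \<in> carrier_mat (t i) (t i)"
    and T: "0 < Tdim t k" and k: "k \<ge> 1"
    and u: "goodm n k u" and w: "goodm n k w"
  shows "(\<Sum>r<Tdim t k. Em t k v u p r * Em t k v w r q) = Em t k v (zc u w) p q"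
proof -
  let ?K = "k - 1"
  let ?W = "\<lambda>i ws. wordmat t v i ws"
  let ?g = "\<lambda>i c. ?W i (u ! i) $$ (dg t ?K i p, c) * ?W i (w ! i) $$ (c, dg t ?K i q)"
  have lu: "length u = k" "\<forall>j<k. set (u ! j) \<subseteq> {..<n}" using u unfolding goodm_def by auto
  have lw: "length w = k" "\<forall>j<k. set (w ! j) \<subseteq> {..<n}" using w unfolding goodm_def by auto
  have "Em t k v (zc u w) p q = (\<Prod>i<?K. (?W i (u ! i) * ?W i (w ! i)) $$ (dg t ?K i p, dg t ?K i q))"
    unfolding Em_def kdigit_dg
  proof (rule prod.cong[OF refl])
    fix i assume "i \<in> {..<?K}"
    then have i: "i < k" "i < ?K" using k by auto
    have "zc u w ! i = u ! i @ w ! i" using i lu lw by (simp add: zc_nth)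
    then show "?W i (zc u w ! i) $$ (dg t ?K i p, dg t ?K i q) =
      (?W i (u ! i) * ?W i (w ! i)) $$ (dg t ?K i p, dg t ?K i q)"
      using wordmat_append[of n v i t "u ! i" "w ! i"] carr i lu lw by simp
  qed
  also have "\<dots> = (\<Prod>i<?K. \<Sum>c<t i. ?g i c)"
  proof (rule prod.cong[OF refl])
    fix i assume "i \<in> {..<?K}"
    then have i: "i < k" "i < ?K" using k by auto
    have tp: "0 < t i" using Tdim_pos_t[OF T i(2)] .
    show "(?W i (u ! i) * ?W i (w ! i)) $$ (dg t ?K i p, dg t ?K i q) = (\<Sum>c<t i. ?g i c)"
    proof (rule mat_mult_entry[where m="t i" and l="t i" and r="t i"])
      show "?W i (u ! i) \<in> carrier_mat (t i) (t i)" by (rule wordmat_carrier[where n=n]) (use carr i lu lw in auto)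
      show "?W i (w ! i) \<in> carrier_mat (t i) (t i)" by (rule wordmat_carrier[where n=n]) (use carr i lu lw in auto)
    qed (use tp digit_lt in auto)
  qed
  also have "\<dots> = (\<Sum>r<(\<Prod>i<?K. t i). \<Prod>i<?K. ?g i (dg t ?K i r))"
    by (rule digit_sum[symmetric])
  also have "\<dots> = (\<Sum>r<Tdim t k. Em t k v u p r * Em t k v w r q)"
    unfolding Tdim_def Em_def kdigit_dg by (simp add: prod.distrib)
  finally show ?thesis by simp
qed



lemma pe_mult:
  assumes carr: "\<forall>i<k-1. \<forall>a<n. v i a \<in> carrier_mat (t i) (t i)"
    and T: "0 < Tdim t k" and k: "k \<ge> 1"
    and g: "good n k g" and h: "good n k h"
  shows "peval_entry t k v (tmult g h) p q
       = (\<Sum>r<Tdim t k. tmult (peval_entry t k v g p r) (peval_entry t k v h r q))"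
proof (rule ext)
  fix m
  define K where "K = k - 1"
  define Sg where "Sg = tsupp g"
  define Sh where "Sh = tsupp h"
  have fSg: "finite Sg" and gSg: "\<And>u. u \<in> Sg \<Longrightarrow> goodm n k u" using g unfolding good_def Sg_def by auto
  have fSh: "finite Sh" and gSh: "\<And>u. u \<in> Sh \<Longrightarrow> goodm n k u" using h unfolding good_def Sh_def by auto
  have lSg: "\<And>u. u \<in> Sg \<Longrightarrow> length u = k" using gSg unfolding goodm_def by auto
  have lSh: "\<And>u. u \<in> Sh \<Longrightarrow> length u = k" using gSh unfolding goodm_def by auto
  define P where "P = {(u, w). u \<in> Sg \<and> w \<in> Sh \<and> length u = length w}"
  define S where "S = (\<lambda>(u, w). zc u w) ` P"
  have fP: "finite P" unfolding P_def by (rule finite_subset[of _ "Sg \<times> Sh"]) (use fSg fSh in auto)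
  have fS: "finite S" unfolding S_def using fP by simp
  have sS: "tsupp (tmult g h) \<subseteq> S" unfolding S_def P_def Sg_def Sh_def by (rule tsupp_tmult)
  have rhs: "(\<Sum>r<Tdim t k. tmult (peval_entry t k v g p r) (peval_entry t k v h r q)) m
     = (\<Sum>r<Tdim t k. \<Sum>(u1, w1)\<in>tsplits m. peval_entry t k v g p r u1 * peval_entry t k v h r q w1)"
    by (simp add: sum_fun_apply tmult_def)
  show "peval_entry t k v (tmult g h) p q m
       = (\<Sum>r<Tdim t k. tmult (peval_entry t k v g p r) (peval_entry t k v h r q)) m"
  proof (cases "length m = 1")
    case False
    have "peval_entry t k v g p r u1 = 0" if "(u1, w1) \<in> tsplits m" for r u1 w1
      using that False unfolding tsplits_def peval_entry_def by auto
    then have "(\<Sum>r<Tdim t k. \<Sum>(u1, w1)\<in>tsplits m. peval_entry t k v g p r u1 * peval_entry t k v h r q w1) = 0"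
      by (auto intro!: sum.neutral)
    then show ?thesis unfolding rhs pe_superset[OF fS sS] using False by simp
  next
    case True
    define x where "x = m ! 0"
    define B where "B = {(u, w). u \<in> Sg \<and> w \<in> Sh \<and> u ! K @ w ! K = x}"
    have fB: "finite B" unfolding B_def by (rule finite_subset[of _ "Sg \<times> Sh"]) (use fSg fSh in auto)
    define A where "A = {mm \<in> S. length mm = k \<and> mm ! (k - 1) = m ! 0}"
    have fA: "finite A" unfolding A_def using fS by simp
    have zcK: "zc u w ! K = u ! K @ w ! K" if "u \<in> Sg" "w \<in> Sh" for u w
      using lSg[OF that(1)] lSh[OF that(2)] k unfolding K_def by (simp add: zc_nth)
    have step_a: "tmult g h mm = (\<Sum>(u, w)\<in>{uw \<in> B. (\<lambda>(u, w). zc u w) uw = mm}. g u * h w)"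
      if mm: "mm \<in> A" for mm
    proof -
      have lm: "length mm = k" and mK: "mm ! K = x" using mm unfolding A_def K_def x_def by auto
      have "tmult g h mm = (\<Sum>(u, w)\<in>tsplits mm. g u * h w)" unfolding tmult_def ..
      also have "\<dots> = (\<Sum>(u, w)\<in>tsplits mm \<inter> (Sg \<times> Sh). g u * h w)"
        by (rule sum.mono_neutral_right) (auto simp: tsplits_finite Sg_def Sh_def tsupp_def)
      also have "tsplits mm \<inter> (Sg \<times> Sh) = {uw \<in> B. (\<lambda>(u, w). zc u w) uw = mm}"
      proof (intro equalityI subsetI)
        fix uw assume a: "uw \<in> tsplits mm \<inter> (Sg \<times> Sh)"
        obtain u w where uw: "uw = (u, w)" by (cases uw)
        have "zc u w = mm" using a uw tsplits_zc[OF lm] by auto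
        then show "uw \<in> {uw \<in> B. (\<lambda>(u, w). zc u w) uw = mm}"
          using a uw zcK[of u w] mK unfolding B_def by auto
      next
        fix uw assume a: "uw \<in> {uw \<in> B. (\<lambda>(u, w). zc u w) uw = mm}"
        obtain u w where uw: "uw = (u, w)" by (cases uw)
        have "u \<in> Sg" "w \<in> Sh" "zc u w = mm" using a uw unfolding B_def by auto
        then show "uw \<in> tsplits mm \<inter> (Sg \<times> Sh)" using uw tsplits_zc[OF lm] lSg lSh by auto
      qed
      finally show ?thesis .
    qed
    have zcB: "(\<lambda>(u, w). zc u w) ` B \<subseteq> A"
    proof
      fix mm assume "mm \<in> (\<lambda>(u, w). zc u w) ` B"
      then obtain u w where uw: "(u, w) \<in> B" "mm = zc u w" by auto
      then have u: "u \<in> Sg" and w: "w \<in> Sh" and ux: "u ! K @ w ! K = x" unfolding B_def by auto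
      have "mm \<in> S" unfolding S_def P_def using u w uw lSg lSh by auto
      moreover have "length mm = k" using uw lSg[OF u] lSh[OF w] by (simp add: zc_def)
      moreover have "mm ! (k - 1) = m ! 0" using zcK[OF u w] ux uw unfolding K_def x_def by simp
      ultimately show "mm \<in> A" unfolding A_def by simp
    qed
    have "peval_entry t k v (tmult g h) p q m = (\<Sum>mm\<in>A. tmult g h mm * Em t k v mm p q)"
      unfolding pe_superset[OF fS sS] A_def using True by simp
    also have "\<dots> = (\<Sum>mm\<in>A. \<Sum>(u, w)\<in>{uw \<in> B. (\<lambda>(u, w). zc u w) uw = mm}. g u * h w * Em t k v (zc u w) p q)"
      by (intro sum.cong refl) (auto simp: step_a sum_distrib_right intro!: sum.cong)
    also have "\<dots> = (\<Sum>(u, w)\<in>B. g u * h w * Em t k v (zc u w) p q)"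
      by (rule sum.group[OF fB fA zcB])
    finally have LHS: "peval_entry t k v (tmult g h) p q m = (\<Sum>(u, w)\<in>B. g u * h w * Em t k v (zc u w) p q)" .
    define Bg where "Bg = (\<lambda>u1::nat list list. {u \<in> Sg. length u = k \<and> u ! (k - 1) = u1 ! 0})"
    define Bh where "Bh = (\<lambda>w1::nat list list. {w \<in> Sh. length w = k \<and> w ! (k - 1) = w1 ! 0})"
    have sg: "tsupp g \<subseteq> Sg" and sh: "tsupp h \<subseteq> Sh" by (simp_all add: Sg_def Sh_def)
    have pg: "peval_entry t k v g p r u1 = (\<Sum>u\<in>Bg u1. g u * Em t k v u p r)" if "length u1 = 1" for r u1
      unfolding pe_superset[OF fSg sg] Bg_def using that by simp
    have ph: "peval_entry t k v h r q w1 = (\<Sum>w\<in>Bh w1. h w * Em t k v w r q)" if "length w1 = 1" for r w1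
      unfolding pe_superset[OF fSh sh] Bh_def using that by simp
    define phi where "phi = (\<lambda>(u::nat list list, w::nat list list). ([u ! K], [w ! K]))"
    have phiB: "phi ` B \<subseteq> tsplits m"
    proof
      fix y assume "y \<in> phi ` B"
      then obtain u w where "(u, w) \<in> B" "y = ([u ! K], [w ! K])" unfolding phi_def by auto
      then show "y \<in> tsplits m" using True unfolding B_def tsplits_def x_def by auto
    qed
    have grp: "{uw \<in> B. phi uw = (u1, w1)} = Bg u1 \<times> Bh w1" if "(u1, w1) \<in> tsplits m" for u1 w1
    proof -
      have l1: "length u1 = 1" "length w1 = 1" and e: "u1 ! 0 @ w1 ! 0 = x"
        using that True unfolding tsplits_def x_def by auto
      have u1: "u1 = [u1 ! 0]" using l1 by (cases u1) auto
      have w1: "w1 = [w1 ! 0]" using l1 by (cases w1) auto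
      show ?thesis
      proof (intro equalityI subsetI)
        fix uw assume "uw \<in> {uw \<in> B. phi uw = (u1, w1)}"
        then obtain u w where "uw = (u, w)" "u \<in> Sg" "w \<in> Sh" "[u ! K] = u1" "[w ! K] = w1"
          unfolding B_def phi_def by auto
        then show "uw \<in> Bg u1 \<times> Bh w1" unfolding Bg_def Bh_def K_def using lSg lSh by auto
      next
        fix uw assume "uw \<in> Bg u1 \<times> Bh w1"
        then obtain u w where "uw = (u, w)" "u \<in> Sg" "w \<in> Sh" "u ! K = u1 ! 0" "w ! K = w1 ! 0"
          unfolding Bg_def Bh_def K_def by auto
        then show "uw \<in> {uw \<in> B. phi uw = (u1, w1)}" unfolding B_def phi_def using e u1 w1
          by (metis (mono_tags, lifting) case_prod_conv mem_Collect_eq)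
      qed
    qed
    have "(\<Sum>r<Tdim t k. \<Sum>(u1, w1)\<in>tsplits m. peval_entry t k v g p r u1 * peval_entry t k v h r q w1)
       = (\<Sum>r<Tdim t k. \<Sum>(u1, w1)\<in>tsplits m. \<Sum>(u, w)\<in>{uw \<in> B. phi uw = (u1, w1)}.
            g u * Em t k v u p r * (h w * Em t k v w r q))"
    proof (intro sum.cong refl)
      fix r y assume y: "y \<in> tsplits m"
      obtain u1 w1 where y': "y = (u1, w1)" by (cases y)
      have l1: "length u1 = 1" "length w1 = 1" using y y' True unfolding tsplits_def by auto
      show "(case y of (u1, w1) \<Rightarrow> peval_entry t k v g p r u1 * peval_entry t k v h r q w1) =
        (case y of (u1, w1) \<Rightarrow> \<Sum>(u, w)\<in>{uw \<in> B. phi uw = (u1, w1)}. g u * Em t k v u p r * (h w * Em t k v w r q))"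
        unfolding y' using l1 grp[OF y[unfolded y']]
        by (simp add: pg ph sum_product sum.cartesian_product)
    qed
    also have "\<dots> = (\<Sum>r<Tdim t k. \<Sum>(u, w)\<in>B. g u * Em t k v u p r * (h w * Em t k v w r q))"
    proof (rule sum.cong[OF refl])
      fix r
      let ?H = "\<lambda>(u, w). g u * Em t k v u p r * (h w * Em t k v w r q)"
      have "(\<Sum>(u1, w1)\<in>tsplits m. \<Sum>(u, w)\<in>{uw \<in> B. phi uw = (u1, w1)}.
            g u * Em t k v u p r * (h w * Em t k v w r q)) = (\<Sum>y\<in>tsplits m. sum ?H {uw \<in> B. phi uw = y})"
        by (intro sum.cong refl) (simp add: split_def)
      also have "\<dots> = sum ?H B" by (rule sum.group[OF fB tsplits_finite phiB])
      finally show "(\<Sum>(u1, w1)\<in>tsplits m. \<Sum>(u, w)\<in>{uw \<in> B. phi uw = (u1, w1)}.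
            g u * Em t k v u p r * (h w * Em t k v w r q)) = (\<Sum>(u, w)\<in>B. g u * Em t k v u p r * (h w * Em t k v w r q))" .
    qed
    also have "\<dots> = (\<Sum>(u, w)\<in>B. g u * h w * (\<Sum>r<Tdim t k. Em t k v u p r * Em t k v w r q))"
      by (subst sum.swap) (auto simp: sum_distrib_left mult_ac intro!: sum.cong)
    also have "\<dots> = (\<Sum>(u, w)\<in>B. g u * h w * Em t k v (zc u w) p q)"
    proof (intro sum.cong refl)
      fix uw assume "uw \<in> B"
      then obtain u w where uw: "uw = (u, w)" "u \<in> Sg" "w \<in> Sh" unfolding B_def by auto
      show "(case uw of (u, w) \<Rightarrow> g u * h w * (\<Sum>r<Tdim t k. Em t k v u p r * Em t k v w r q)) =
            (case uw of (u, w) \<Rightarrow> g u * h w * Em t k v (zc u w) p q)"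
        using uw E_mult[OF carr T k gSg[OF uw(2)] gSh[OF uw(3)]] by simp
    qed
    finally show ?thesis unfolding rhs LHS by (rule sym)
  qed
qed



definition Dm :: "(nat \<Rightarrow> nat) \<Rightarrow> nat \<Rightarrow> nat \<Rightarrow> nat \<Rightarrow> 'a::field" where
  "Dm t k r r' = (\<Prod>i<k - 1. if kdigit t k i r = kdigit t k i r' then 1 else 0)"

definition Vm :: "(nat \<Rightarrow> nat) \<Rightarrow> nat \<Rightarrow> (nat \<Rightarrow> nat \<Rightarrow> 'a::field mat) \<Rightarrow> nat \<Rightarrow> nat \<Rightarrow> nat \<Rightarrow> nat \<Rightarrow> 'a" where
  "Vm t k v j i r r' = (\<Prod>i'<k - 1. if i' = j then v j i $$ (kdigit t k j r, kdigit t k j r')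
      else (if kdigit t k i' r = kdigit t k i' r' then 1 else 0))"

definition newc :: "(nat \<Rightarrow> nat) \<Rightarrow> nat \<Rightarrow> (nat \<Rightarrow> nat \<Rightarrow> 'a::field mat) \<Rightarrow> nat \<Rightarrow> 'a \<Rightarrow> (nat \<Rightarrow> nat \<Rightarrow> 'a)
   \<Rightarrow> nat \<Rightarrow> nat \<Rightarrow> 'a" where
  "newc t k v n c a r r' = c * Dm t k r r' + (\<Sum>i<n. \<Sum>j<k - 1. a i j * Vm t k v j i r r')"

definition newa :: "(nat \<Rightarrow> nat) \<Rightarrow> nat \<Rightarrow> (nat \<Rightarrow> nat \<Rightarrow> 'a::field) \<Rightarrow> nat \<Rightarrow> nat \<Rightarrow> nat \<Rightarrow> nat \<Rightarrow> 'a" where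
  "newa t k a r r' = (\<lambda>i j. a i (k - 1) * Dm t k r r')"

lemma Em_entry_one:
  assumes T: "0 < Tdim t k" and "i < k - 1"
  shows "1\<^sub>m (t i) $$ (kdigit t k i r, kdigit t k i r') = (if kdigit t k i r = kdigit t k i r' then 1 else (0::'a::field))"
proof -
  have "0 < t i" using Tdim_pos_t[OF T assms(2)] .
  then show ?thesis unfolding kdigit_dg by (simp add: digit_lt)
qed

lemma pe_tone:
  assumes T: "0 < Tdim t k" and k: "k \<ge> 1"
  shows "peval_entry t k v (tone k :: 'a::field tpoly) r r' = (\<lambda>m. Dm t k r r' * tone 1 m)"
proof (rule ext)
  fix m
  let ?S = "{replicate k []}"
  have fS: "finite ?S" by simp
  have sS: "tsupp (tone k :: 'a tpoly) \<subseteq> ?S" unfolding tsupp_def tone_def by auto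
  have E: "Em t k v (replicate k []) r r' = (Dm t k r r' :: 'a)"
    unfolding Em_def Dm_def by (intro prod.cong refl) (simp add: wordmat_def Em_entry_one[OF T])
  have last: "replicate k [] ! (k - 1) = ([] :: nat list)" using k by simp
  show "peval_entry t k v (tone k) r r' m = Dm t k r r' * tone 1 m"
  proof (cases "length m = 1")
    case True
    then obtain y where m: "m = [y]" by (cases m) auto
    show ?thesis
    proof (cases "y = []")
      case True
      have eqs: "{mm \<in> ?S. length mm = k \<and> mm ! (k - 1) = m ! 0} = ?S" using m True last by auto
      then show ?thesis unfolding pe_superset[OF fS sS] eqs using m True E by (simp add: tone_def)
    next
      case False
      have eqs: "{mm \<in> ?S. length mm = k \<and> mm ! (k - 1) = m ! 0} = {}" using m False last by auto
      then show ?thesis unfolding pe_superset[OF fS sS] eqs using m False by (simp add: tone_def)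
    qed
  next
    case False
    then show ?thesis unfolding pe_superset[OF fS sS] by (auto simp: tone_def)
  qed
qed

lemma pe_tvar:
  assumes carr: "\<forall>i<k-1. \<forall>a<n. v i a \<in> carrier_mat (t i) (t i)"
    and T: "0 < Tdim t k" and k: "k \<ge> 1" and i: "i < n" and j: "j < k"
  shows "peval_entry t k v (tvar k i j :: 'a::field tpoly) r r' =
    (\<lambda>m. if j < k - 1 then Vm t k v j i r r' * tone 1 m else Dm t k r r' * tvar 1 i 0 m)"
proof (rule ext)
  fix m
  define mm0 where "mm0 = (replicate k ([]::nat list))[j := [i]]"
  let ?S = "{mm0}"
  have fS: "finite ?S" by simp
  have sS: "tsupp (tvar k i j :: 'a tpoly) \<subseteq> ?S" unfolding tsupp_def tvar_def mm0_def by auto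
  have nth0: "mm0 ! i' = (if i' = j then [i] else [])" if "i' < k" for i'
    unfolding mm0_def using that j by (simp add: nth_list_update)
  have tv: "tvar k i j mm0 = (1::'a)" unfolding tvar_def mm0_def by simp
  have wm: "wordmat t v j [i] = v j i" if "j < k - 1"
  proof -
    have "v j i \<in> carrier_mat (t j) (t j)" using carr that i by auto
    then show ?thesis by (simp add: wordmat_def)
  qed
  show "peval_entry t k v (tvar k i j) r r' m =
    (if j < k - 1 then Vm t k v j i r r' * tone 1 m else Dm t k r r' * tvar 1 i 0 m)"
  proof (cases "length m = 1")
    case False
    then show ?thesis unfolding pe_superset[OF fS sS] using False by (auto simp: tone_def tvar_def)
  next
    case True
    then obtain y where m: "m = [y]" by (cases m) auto
    show ?thesis
    proof (cases "j < k - 1")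
      case jK: True
      have E: "Em t k v mm0 r r' = (Vm t k v j i r r' :: 'a)"
        unfolding Em_def Vm_def
      proof (intro prod.cong refl)
        fix i' assume "i' \<in> {..<k - 1}"
        then have "i' < k" "i' < k - 1" by auto
        note e1 = Em_entry_one[OF T \<open>i' < k - 1\<close>, where r=r and r'=r']
        show "wordmat t v i' (mm0 ! i') $$ (kdigit t k i' r, kdigit t k i' r') =
          (if i' = j then v j i $$ (kdigit t k j r, kdigit t k j r')
           else if kdigit t k i' r = kdigit t k i' r' then 1 else 0)"
          using nth0[OF \<open>i' < k\<close>] wm jK e1 by (auto simp: wordmat_def)
      qed
      have lastK: "mm0 ! (k - 1) = []" using nth0[of "k - 1"] jK k by simp
      show ?thesis
      proof (cases "y = []")
        case True
        have eqs: "{mm \<in> ?S. length mm = k \<and> mm ! (k - 1) = m ! 0} = ?S" using m True lastK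
          by (auto simp: mm0_def)
        then show ?thesis unfolding pe_superset[OF fS sS] eqs using m True E jK tv by (simp add: tone_def)
      next
        case False
        have eqs: "{mm \<in> ?S. length mm = k \<and> mm ! (k - 1) = m ! 0} = {}" using m False lastK by auto
        then show ?thesis unfolding pe_superset[OF fS sS] eqs using m False jK by (simp add: tone_def)
      qed
    next
      case jK: False
      then have jk: "j = k - 1" using j by simp
      have E: "Em t k v mm0 r r' = (Dm t k r r' :: 'a)"
        unfolding Em_def Dm_def
      proof (intro prod.cong refl)
        fix i' assume "i' \<in> {..<k - 1}"
        then have "i' < k" "i' < k - 1" "i' \<noteq> j" using jk by auto
        note e1 = Em_entry_one[OF T \<open>i' < k - 1\<close>, where r=r and r'=r']
        show "wordmat t v i' (mm0 ! i') $$ (kdigit t k i' r, kdigit t k i' r') =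
          (if kdigit t k i' r = kdigit t k i' r' then 1 else 0)"
          using nth0[OF \<open>i' < k\<close>] e1 \<open>i' \<noteq> j\<close> by (auto simp: wordmat_def)
      qed
      have lastK: "mm0 ! (k - 1) = [i]" using nth0[of "k - 1"] jk k by simp
      have tv1: "tvar 1 i 0 m = (if y = [i] then 1 else (0::'a))" unfolding tvar_def m by simp
      show ?thesis
      proof (cases "y = [i]")
        case True
        have eqs: "{mm \<in> ?S. length mm = k \<and> mm ! (k - 1) = m ! 0} = ?S" using m True lastK
          by (auto simp: mm0_def)
        then show ?thesis unfolding pe_superset[OF fS sS] eqs using m True E jK tv tv1 by simp
      next
        case False
        have eqs: "{mm \<in> ?S. length mm = k \<and> mm ! (k - 1) = m ! 0} = {}" using m False lastK by auto
        then show ?thesis unfolding pe_superset[OF fS sS] eqs using m False jK tv1 by simp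
      qed
    qed
  qed
qed



lemma good_finite: "good n k g \<Longrightarrow> finite (tsupp g)"
  unfolding good_def by simp

lemma pe_aff:
  assumes carr: "\<forall>i<k-1. \<forall>a<n. v i a \<in> carrier_mat (t i) (t i)"
    and T: "0 < Tdim t k" and k: "k \<ge> 1"
  shows "peval_entry t k v (aff_poly n k c a) r r' = aff_poly n 1 (newc t k v n c a r r') (newa t k a r r')"
proof (rule ext)
  fix m
  define K where "K = k - 1"
  have kK: "k = Suc K" using k unfolding K_def by simp
  define G where "G = (\<lambda>i m. \<Sum>j<k. a i j * tvar k i j m)"
  have gG: "good n k (G i)" if "i < n" for i
    unfolding G_def by (intro good_sum' good_scale good_tvar) (use that in auto)
  have fG: "\<And>i. i \<in> {..<n} \<Longrightarrow> finite (tsupp (G i))" using gG good_finite by auto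
  have psum: "peval_entry t k v (\<lambda>m. \<Sum>i<n. G i m) r r' m = (\<Sum>i<n. peval_entry t k v (G i) r r' m)"
    by (rule pe_sum) (use fG in auto)
  have gS: "good n k (\<lambda>m. \<Sum>i<n. G i m)" by (intro good_sum' gG) auto
  have eq: "aff_poly n k c a = (\<lambda>m. c * tone k m + (\<Sum>i<n. G i m))"
    unfolding aff_poly_def G_def by simp
  have "peval_entry t k v (aff_poly n k c a) r r' m
      = c * peval_entry t k v (tone k) r r' m + (\<Sum>i<n. peval_entry t k v (G i) r r' m)"
    unfolding eq
    by (simp add: pe_add good_finite[OF good_scale[OF good_tone]] good_finite[OF gS] pe_scale
        good_finite[OF good_tone] psum)
  also have "\<dots> = c * (Dm t k r r' * tone 1 m) +
      (\<Sum>i<n. \<Sum>j<k. a i j * (if j < k - 1 then Vm t k v j i r r' * tone 1 m else Dm t k r r' * tvar 1 i 0 m))"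
  proof -
    have "peval_entry t k v (G i) r r' m =
        (\<Sum>j<k. a i j * (if j < k - 1 then Vm t k v j i r r' * tone 1 m else Dm t k r r' * tvar 1 i 0 m))"
      if i: "i < n" for i
    proof -
      have "peval_entry t k v (G i) r r' m = (\<Sum>j<k. a i j * peval_entry t k v (tvar k i j) r r' m)"
      proof -
        have "peval_entry t k v (G i) r r' m = (\<Sum>j<k. peval_entry t k v (\<lambda>m. a i j * tvar k i j m) r r' m)"
          unfolding G_def by (rule pe_sum) (use good_finite[OF good_scale[OF good_tvar]] i in auto)
        also have "\<dots> = (\<Sum>j<k. a i j * peval_entry t k v (tvar k i j) r r' m)"
          by (intro sum.cong refl pe_scale) (use good_finite[OF good_tvar] i in auto)
        finally show ?thesis .
      qed
      also have "\<dots> = (\<Sum>j<k. a i j * (if j < k - 1 then Vm t k v j i r r' * tone 1 m else Dm t k r r' * tvar 1 i 0 m))"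
        by (intro sum.cong refl) (simp add: pe_tvar[OF carr T k i])
      finally show ?thesis .
    qed
    then show ?thesis by (simp add: pe_tone[OF T k])
  qed
  also have "\<dots> = aff_poly n 1 (newc t k v n c a r r') (newa t k a r r') m"
    unfolding aff_poly_def newc_def newa_def K_def[symmetric] kK
    by (simp add: sum.distrib sum_distrib_right sum_distrib_left algebra_simps)
  finally show "peval_entry t k v (aff_poly n k c a) r r' m = aff_poly n 1 (newc t k v n c a r r') (newa t k a r r') m" .
qed



lemma Dm_self: "Dm t k r r = 1"
  unfolding Dm_def by simp

lemma Dm_ne:
  assumes "r < Tdim t k" "r' < Tdim t k" "r \<noteq> r'"
  shows "Dm t k r r' = 0"
proof (rule ccontr)
  assume "Dm t k r r' \<noteq> 0"
  then have "\<forall>i<k - 1. kdigit t k i r = kdigit t k i r'"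
    unfolding Dm_def by (auto simp: prod_zero_iff split: if_splits)
  then have "r = r'" using digit_inj[where r=r and K="k - 1" and t=t and r'=r'] assms unfolding Tdim_def kdigit_dg by auto
  then show False using assms by simp
qed

lemma good_lab: "good n k (case L of (c, a) \<Rightarrow> aff_poly n k c a)"
  by (cases L) (simp add: good_aff)

lemma good_absum:
  assumes "l \<le> d - 1"
  shows "good n k (absum d w (\<lambda>j a b acc. tmult (case L j a b of (c, a) \<Rightarrow> aff_poly n k c a) acc) (tone k) l a)"
  using assms
proof (induct l arbitrary: a rule: inc_induct)
  case base
  then show ?case by (subst absum.simps) (simp add: good_tone good_zero)
next
  case (step m)
  then show ?case by (subst absum.simps) (auto intro!: good_sum good_tmult good_lab)
qed

theorem lemma13:
  fixes f :: "'a::field tpoly"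
    and L :: "nat \<Rightarrow> nat \<Rightarrow> nat \<Rightarrow> 'a \<times> (nat \<Rightarrow> nat \<Rightarrow> 'a)"
    and w t :: "nat \<Rightarrow> nat"
    and v :: "nat \<Rightarrow> nat \<Rightarrow> 'a mat"
    and n k d s p q :: nat
  assumes "k \<ge> 1"
    and "is_abp d w" and "abp_size d w = s" and "f = abp_poly n k d w L"
    and "\<forall>i<k - 1. \<forall>a<n. v i a \<in> carrier_mat (t i) (t i)"
    and "p < Tdim t k" and "q < Tdim t k"
  shows "\<exists>w' L'. is_abp d w' \<and> abp_size d w' \<le> s * Tdim t k \<and>
            abp_poly n 1 d w' L' = peval_entry t k v f p q"
proof -
  note k = assms(1) and carr = assms(5)
  define T where "T = Tdim t k"
  have T: "0 < Tdim t k" using assms(6) by simp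
  have d: "d \<ge> 2" "w 0 = 1" "w (d - 1) = 1" using assms(2) unfolding is_abp_def by auto
  define w' where "w' = (\<lambda>l. if l = 0 \<or> l = d - 1 then 1 else w l * T)"
  define nd where "nd = (\<lambda>l x. if l = 0 \<or> l = d - 1 then 0 else x div T)"
  define st where "st = (\<lambda>l x. if l = 0 then p else if l = d - 1 then q else x mod T)"
  define L' where "L' = (\<lambda>l x y. case L l (nd l x) (nd (Suc l) y) of (c, a) \<Rightarrow>
      (newc t k v n c a (st l x) (st (Suc l) y), newa t k a (st l x) (st (Suc l) y)))"
  define F where "F = (\<lambda>j a b acc. tmult (case L j a b of (c, a) \<Rightarrow> aff_poly n k c a) acc)"
  define F' where "F' = (\<lambda>j a b acc. tmult (case L' j a b of (c, a) \<Rightarrow> aff_poly n 1 c a) (acc :: 'a tpoly))"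
  define R where "R = absum d w F (tone k)"
  define R' where "R' = absum d w' F' (tone 1)"
  have isw': "is_abp d w'" unfolding is_abp_def w'_def using d by simp
  have size: "abp_size d w' \<le> s * T"
  proof -
    have "w' l \<le> w l * T" if "l < d" for l
      using d T unfolding w'_def T_def by auto
    then have "(\<Sum>l<d. w' l) \<le> (\<Sum>l<d. w l * T)" by (intro sum_mono) auto
    then show ?thesis using assms(3) unfolding abp_size_def by (simp add: sum_distrib_right[symmetric])
  qed
  have old: "abp_poly n k d w L = R 0 0"
  proof -
    have "(\<Sum>ps\<in>abp_paths d w. foldr (\<lambda>j acc. F j (ps ! j) (ps ! Suc j) acc) [0..<d-1] (tone k)) = R 0 0"
      unfolding R_def
    proof (rule abp_rec)
      show "\<And>j a b. F j a b 0 = 0" unfolding F_def by (rule tmult_zero)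
      show "\<And>j a b x y. F j a b (x + y) = F j a b x + F j a b y" unfolding F_def by (rule tmult_add)
    qed (use d in \<open>auto simp:\<close>)
    then show ?thesis unfolding abp_poly_def F_def by (simp add: fun_eq_iff sum_fun_apply)
  qed
  have new: "abp_poly n 1 d w' L' = R' 0 0"
  proof -
    have "(\<Sum>ps\<in>abp_paths d w'. foldr (\<lambda>j acc. F' j (ps ! j) (ps ! Suc j) acc) [0..<d-1] (tone 1)) = R' 0 0"
      unfolding R'_def
    proof (rule abp_rec)
      show "\<And>j a b. F' j a b 0 = 0" unfolding F'_def by (rule tmult_zero)
      show "\<And>j a b x y. F' j a b (x + y) = F' j a b x + F' j a b y" unfolding F'_def by (rule tmult_add)
    qed (use d in \<open>auto simp: w'_def\<close>)
    then show ?thesis unfolding abp_poly_def F'_def by (simp add: fun_eq_iff sum_fun_apply)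
  qed
  have goodR: "good n k (R l a)" if "l \<le> d - 1" for l a
    unfolding R_def F_def by (rule good_absum[OF that])
  have labg: "good n k (case L l a b of (c, a) \<Rightarrow> aff_poly n k c a)" for l a b
    by (rule good_lab)
  have main: "\<forall>x<w' l. R' l x = peval_entry t k v (R l (nd l x)) (st l x) q" if "l \<le> d - 1" for l
    using that
  proof (induct l rule: inc_induct)
    case base
    show ?case
    proof (intro allI impI)
      fix x assume "x < w' (d - 1)"
      then have x: "x = 0" unfolding w'_def by simp
      have "R' (d - 1) 0 = tone 1" unfolding R'_def by (subst absum.simps) simp
      moreover have "R (d - 1) 0 = tone k" unfolding R_def by (subst absum.simps) simp
      moreover have "nd (d - 1) 0 = 0" "st (d - 1) 0 = q" unfolding nd_def st_def using d by auto
      ultimately show "R' (d - 1) x = peval_entry t k v (R (d - 1) (nd (d - 1) x)) (st (d - 1) x) q"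
        using x by (simp add: pe_tone[OF T k] Dm_self)
    qed
  next
    case (step l)
    show ?case
    proof (intro allI impI)
      fix x assume x: "x < w' l"
      define a where "a = nd l x"
      define r where "r = st l x"
      have r: "r < T" unfolding r_def st_def T_def using assms(6,7) by auto
      let ?lab = "\<lambda>b. case L l a b of (c, a) \<Rightarrow> aff_poly n k c a"
      let ?lab' = "\<lambda>b r'. case L l a b of (c, a) \<Rightarrow> aff_poly n 1 (newc t k v n c a r r') (newa t k a r r')"
      have pe_lab: "peval_entry t k v (?lab b) r r' = ?lab' b r'" for b r'
        by (cases "L l a b") (simp add: pe_aff[OF carr T k])
      have "peval_entry t k v (R l a) r q
          = peval_entry t k v (\<Sum>b<w (Suc l). tmult (?lab b) (R (Suc l) b)) r q"
        unfolding R_def F_def using step(2) by (subst absum.simps) simp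
      also have "\<dots> = (\<Sum>b<w (Suc l). peval_entry t k v (tmult (?lab b) (R (Suc l) b)) r q)"
        by (rule pe_sum_fun) (use good_finite[OF good_tmult[OF labg goodR]] step(2) in auto)
      also have "\<dots> = (\<Sum>b<w (Suc l). \<Sum>r'<T. tmult (?lab' b r') (peval_entry t k v (R (Suc l) b) r' q))"
      proof (intro sum.cong refl)
        fix b
        have "peval_entry t k v (tmult (?lab b) (R (Suc l) b)) r q
            = (\<Sum>r'<T. tmult (peval_entry t k v (?lab b) r r') (peval_entry t k v (R (Suc l) b) r' q))"
          unfolding T_def by (rule pe_mult[OF carr T k labg goodR]) (use step(2) in auto)
        then show "peval_entry t k v (tmult (?lab b) (R (Suc l) b)) r q
            = (\<Sum>r'<T. tmult (?lab' b r') (peval_entry t k v (R (Suc l) b) r' q))"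
          by (simp add: pe_lab sum_fun_apply fun_eq_iff)
      qed
      finally have E1: "peval_entry t k v (R l a) r q =
        (\<Sum>b<w (Suc l). \<Sum>r'<T. tmult (?lab' b r') (peval_entry t k v (R (Suc l) b) r' q))" .
      have F'eq: "F' l x y X = tmult (?lab' (nd (Suc l) y) (st (Suc l) y)) X" for y X
        unfolding F'_def L'_def a_def r_def by (cases "L l (nd l x) (nd (Suc l) y)") simp
      have "R' l x = (\<Sum>y<w' (Suc l). F' l x y (R' (Suc l) y))"
        unfolding R'_def using step(2) by (subst absum.simps) simp
      also have "\<dots> = (\<Sum>y<w' (Suc l). F' l x y (peval_entry t k v (R (Suc l) (nd (Suc l) y)) (st (Suc l) y) q))"
        using step(3) by (intro sum.cong refl) auto
      also have "\<dots> = (\<Sum>b<w (Suc l). \<Sum>r'<T. tmult (?lab' b r') (peval_entry t k v (R (Suc l) b) r' q))"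
      proof (cases "Suc l = d - 1")
        case False
        then have w's: "w' (Suc l) = w (Suc l) * T" unfolding w'_def by simp
        have ndst: "nd (Suc l) (b * T + r') = b" "st (Suc l) (b * T + r') = r'" if "r' < T" for b r'
          using that False unfolding nd_def st_def by auto
        show ?thesis unfolding w's sum_pair_split
          by (intro sum.cong refl) (simp add: F'eq ndst)
      next
        case True
        then have w's: "w' (Suc l) = 1" unfolding w'_def by simp
        have ndst: "nd (Suc l) 0 = 0" "st (Suc l) 0 = q" using True d unfolding nd_def st_def by auto
        have w1: "w (Suc l) = 1" using True d by simp
        have R0: "R (Suc l) 0 = tone k" unfolding R_def using True by (subst absum.simps) simp
        have pt: "peval_entry t k v (tone k) r' q = (if r' = q then tone 1 else 0)" if "r' < T" for r'
          using that assms(7) Dm_ne[of r' t k q] unfolding pe_tone[OF T k] T_def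
          by (auto simp: Dm_self fun_eq_iff)
        have "(\<Sum>r'<T. tmult (?lab' 0 r') (peval_entry t k v (tone k) r' q))
            = (\<Sum>r'<T. if r' = q then tmult (?lab' 0 q) (tone 1) else 0)"
          by (intro sum.cong refl) (simp add: pt)
        also have "\<dots> = tmult (?lab' 0 q) (tone 1)"
          using assms(7) unfolding T_def by simp
        finally show ?thesis unfolding w's w1 using ndst R0
          by (simp add: F'eq pe_tone[OF T k] Dm_self)
      qed
      also have "\<dots> = peval_entry t k v (R l a) r q" using E1 by simp
      finally show "R' l x = peval_entry t k v (R l (nd l x)) (st l x) q" unfolding a_def r_def .
    qed
  qed
  have "R' 0 0 = peval_entry t k v (R 0 0) p q"
    using main[of 0] d unfolding w'_def nd_def st_def by simp
  then have "abp_poly n 1 d w' L' = peval_entry t k v f p q"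
    using new old assms(4) by simp
  then show ?thesis using isw' size unfolding T_def by blast
qed

end
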